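(* Let $\mathcal{B}\subseteq\{1,2\}^3$ be a basic set, $X^{\mathcal{B}}$ the associated $S_2$-SFT and $F=\{F^{(a)},F^{(b)}\}$ its SNRE with sequences $(a_n),(b_n)$. Then $F$ is of one of the following four types: (1) equal growth type; (2) dominating type; (3) oscillating type; (4) cooperating type.
   Context: $S_2$ is the free semigroup on two generators, identified with finite words over $\{1,2\}$ (root $\epsilon$); alphabet $\{1,2\}$. A basic set $\mathcal{B}\subseteq\{1,2\}^3$ is a set of admissible 2-blocks $(i,i_1,i_2)$ and $X^{\mathcal{B}}$ the associated $S_2$-SFT. Its SNRE is $F^{(a)}(x,y)=\sum_{(1,i,j)\in\mathcal{B}}z_iz_j$, $F^{(b)}(x,y)=\sum_{(2,i,j)\in\mathcal{B}}z_iz_j$ ($z_1=x,z_2=y$), with $a_0=b_0=1$, $a_n=F^{(a)}(a_{n-1},b_{n-1})$, $b_n=F^{(b)}(a_{n-1},b_{n-1})$ for $n\ge1$ ($a_n$, $b_n$ are the numbers of admissible $n$-blocks with root colored $1$, resp. $2$). Types: equal growth: $a_n=b_n$ for all $n\ge1$. Dominating: either $a_n\ge b_n$ for all $n\ge1$ or $b_n\ge a_n$ for all $n\ge 1$. Oscillating: there are two infinite subsequences of $\mathbb{N}$ such that $a_n\ge b_n$ along the first and $a_n<b_n$ along the second. Cooperating: with $c_n=a_n+b_n$, one has $c_n=c_{n-1}^2+g_{n-1}$ for all $n\ge2$, where $g_m=G(a_m,b_m)$ for a polynomial $G$ with nonnegative integer coefficients and $g_m\le c_m^2$ for all $m$.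 *)

theory Defs
  imports Main
begin

definition basic_set :: "(nat \<times> nat \<times> nat) set \<Rightarrow> bool" where
  "basic_set B \<longleftrightarrow> B \<subseteq> {1,2} \<times> {1,2} \<times> {1,2}"

definition zvar :: "nat \<Rightarrow> nat \<Rightarrow> nat \<Rightarrow> nat" where
  "zvar x y i = (if i = 1 then x else y)"

text \<open>F^(k)(x,y) = sum over (k,i,j) in B of z_i z_j  (k = 1 gives F^(a), k = 2 gives F^(b))\<close>
definition snre :: "(nat \<times> nat \<times> nat) set \<Rightarrow> nat \<Rightarrow> nat \<Rightarrow> nat \<Rightarrow> nat" where
  "snre B k x y = (\<Sum>i\<in>{1,2::nat}. \<Sum>j\<in>{1,2::nat}.
                     if (k, i, j) \<in> B then zvar x y i * zvar x y j else 0)"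

fun ab_seq :: "(nat \<times> nat \<times> nat) set \<Rightarrow> nat \<Rightarrow> nat \<times> nat" where
  "ab_seq B 0 = (1, 1)"
| "ab_seq B (Suc n) = (case ab_seq B n of (a, b) \<Rightarrow> (snre B 1 a b, snre B 2 a b))"

definition a_seq :: "(nat \<times> nat \<times> nat) set \<Rightarrow> nat \<Rightarrow> nat" where
  "a_seq B n = fst (ab_seq B n)"

definition b_seq :: "(nat \<times> nat \<times> nat) set \<Rightarrow> nat \<Rightarrow> nat" where
  "b_seq B n = snd (ab_seq B n)"

definition c_seq :: "(nat \<times> nat \<times> nat) set \<Rightarrow> nat \<Rightarrow> nat" where
  "c_seq B n = a_seq B n + b_seq B n"

definition equal_growth_type :: "(nat \<times> nat \<times> nat) set \<Rightarrow> bool" where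
  "equal_growth_type B \<longleftrightarrow> (\<forall>n\<ge>1. a_seq B n = b_seq B n)"

definition dominating_type :: "(nat \<times> nat \<times> nat) set \<Rightarrow> bool" where
  "dominating_type B \<longleftrightarrow> (\<forall>n\<ge>1. a_seq B n \<ge> b_seq B n) \<or> (\<forall>n\<ge>1. b_seq B n \<ge> a_seq B n)"

definition oscillating_type :: "(nat \<times> nat \<times> nat) set \<Rightarrow> bool" where
  "oscillating_type B \<longleftrightarrow> infinite {n. a_seq B n \<ge> b_seq B n} \<and> infinite {n. a_seq B n < b_seq B n}"

definition poly2 :: "(nat \<Rightarrow> nat \<Rightarrow> nat) \<Rightarrow> nat \<Rightarrow> nat \<Rightarrow> nat \<Rightarrow> nat" where
  "poly2 coef N x y = (\<Sum>i\<le>N. \<Sum>j\<le>N. coef i j * x ^ i * y ^ j)"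

definition cooperating_type :: "(nat \<times> nat \<times> nat) set \<Rightarrow> bool" where
  "cooperating_type B \<longleftrightarrow> (\<exists>coef N.
     (\<forall>n\<ge>2. c_seq B n = (c_seq B (n-1))^2 + poly2 coef N (a_seq B (n-1)) (b_seq B (n-1))) \<and>
     (\<forall>m. poly2 coef N (a_seq B m) (b_seq B m) \<le> (c_seq B m)^2))"

end

theory Submission
  imports Defs "HOL-Library.Infinite_Set"
begin

definition ind :: "(nat \<times> nat \<times> nat) set \<Rightarrow> nat \<times> nat \<times> nat \<Rightarrow> nat" where
  "ind B t = (if t \<in> B then 1 else 0)"

lemma ind_le: "ind B t \<le> 1" by (simp add: ind_def)

lemma snre_eq: "snre B k x y = ind B (k,1,1)*x^2 + (ind B (k,1,2) + ind B (k,2,1))*x*y + ind B (k,2,2)*y^2"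
  by (simp add: snre_def zvar_def ind_def power2_eq_square algebra_simps)

lemma stepa:
  assumes step: "\<And>n. ab_seq B (Suc n) = (case ab_seq B n of (a,b) \<Rightarrow> (G a b, H a b))"
  shows "a_seq B (Suc n) = G (a_seq B n) (b_seq B n)" "b_seq B (Suc n) = H (a_seq B n) (b_seq B n)"
  by (simp_all add: a_seq_def b_seq_def step del: ab_seq.simps split: prod.split)

lemma stepnum:
  assumes step: "\<And>n. ab_seq B (Suc n) = (case ab_seq B n of (a,b) \<Rightarrow> (G a b, H a b))"
  shows "a_seq B (numeral k) = G (a_seq B (pred_numeral k)) (b_seq B (pred_numeral k))"
        "b_seq B (numeral k) = H (a_seq B (pred_numeral k)) (b_seq B (pred_numeral k))"
        "a_seq B 1 = G (a_seq B 0) (b_seq B 0)" "b_seq B 1 = H (a_seq B 0) (b_seq B 0)"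
  using stepa[OF step, of "pred_numeral k"] stepa[OF step, of 0] by (simp_all add: numeral_eq_Suc)

lemma inv_gen:
  assumes step: "\<And>n. ab_seq B (Suc n) = (case ab_seq B n of (a,b) \<Rightarrow> (G a b, H a b))"
    and "I 1 1" and cl: "\<And>a b. I a b \<Longrightarrow> I (G a b) (H a b)"
  shows "I (a_seq B n) (b_seq B n)"
proof (induction n)
  case 0 then show ?case using assms(2) by (simp add: a_seq_def b_seq_def)
next
  case (Suc n) then show ?case using cl stepa[OF step] by simp
qed

lemma alt_gen:
  assumes step: "\<And>n. ab_seq B (Suc n) = (case ab_seq B n of (a,b) \<Rightarrow> (G a b, H a b))"
    and "Q (a_seq B m) (b_seq B m)" and QR: "\<And>a b. Q a b \<Longrightarrow> R (G a b) (H a b)"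
    and RQ: "\<And>a b. R a b \<Longrightarrow> Q (G a b) (H a b)"
  shows "Q (a_seq B (m+2*k)) (b_seq B (m+2*k)) \<and> R (a_seq B (m+2*k+1)) (b_seq B (m+2*k+1))"
proof (induction k)
  case 0 then show ?case using assms(2) QR stepa[OF step] by simp
next
  case (Suc k)
  have e: "m + 2 * Suc k = Suc (m+2*k+1)" by simp
  have q: "Q (a_seq B (m + 2 * Suc k)) (b_seq B (m + 2 * Suc k))"
    unfolding e using Suc RQ stepa[OF step] by simp
  then show ?case using QR stepa[OF step] by simp
qed

lemma infinite_from:
  fixes m :: nat assumes "\<And>k. P (m + 2*k)" shows "infinite {n. P n}"
unfolding infinite_nat_iff_unbounded_le
proof
  fix j show "\<exists>n\<ge>j. n \<in> {n. P n}"
    by (rule exI[of _ "m + 2*j"]) (use assms in auto)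
qed

lemma keyineq:
  fixes x y p1 q1 r1 p2 q2 r2 :: nat
  assumes "y \<le> x" "p2 \<le> p1" "p2 + q2 \<le> p1 + q1" "p2+q2+r2 \<le> p1+q1+r1"
  shows "p2*(x*x) + q2*(x*y) + r2*(y*y) \<le> p1*(x*x) + q1*(x*y) + r1*(y*y)"
proof -
  define X where "X = int x * int x - int x * int y"
  define Y where "Y = int x * int y - int y * int y"
  define Z where "Z = int y * int y"
  have X: "X \<ge> 0" using assms(1) unfolding X_def
    by (simp add: mult_left_mono)
  have Y: "Y \<ge> 0" using assms(1) unfolding Y_def
    by (simp add: mult_right_mono)
  have Z: "Z \<ge> 0" unfolding Z_def by simp
  have "(int p1 - int p2) * X + ((int p1 + int q1) - (int p2 + int q2)) * Y
        + ((int p1 + int q1 + int r1) - (int p2 + int q2 + int r2)) * Z \<ge> 0"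
    using X Y Z assms by (intro add_nonneg_nonneg mult_nonneg_nonneg) auto
  then have "int (p2*(x*x) + q2*(x*y) + r2*(y*y)) \<le> int (p1*(x*x) + q1*(x*y) + r1*(y*y))"
    unfolding X_def Y_def Z_def by (simp add: power2_eq_square algebra_simps)
  then show ?thesis by linarith
qed


lemma dom_a:
  assumes step: "\<And>n. ab_seq B (Suc n) = (case ab_seq B n of (a,b) \<Rightarrow> (G a b, H a b))"
    and cl: "\<And>a b. b \<le> a \<Longrightarrow> H a b \<le> G a b"
  shows "dominating_type B"
proof -
  have "\<And>n. b_seq B n \<le> a_seq B n"
    by (rule inv_gen[OF step, where I="\<lambda>a b. b \<le> a"]) (auto simp: cl)
  then show ?thesis unfolding dominating_type_def by auto
qed

lemma dom_b:
  assumes step: "\<And>n. ab_seq B (Suc n) = (case ab_seq B n of (a,b) \<Rightarrow> (G a b, H a b))"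
    and cl: "\<And>a b. a \<le> b \<Longrightarrow> G a b \<le> H a b"
  shows "dominating_type B"
proof -
  have "\<And>n. a_seq B n \<le> b_seq B n"
    by (rule inv_gen[OF step, where I="\<lambda>a b. a \<le> b"]) (auto simp: cl)
  then show ?thesis unfolding dominating_type_def by auto
qed

lemma dom_inv_a:
  assumes step: "\<And>n. ab_seq B (Suc n) = (case ab_seq B n of (a,b) \<Rightarrow> (G a b, H a b))"
    and "I 1 1" and cl: "\<And>a b. I a b \<Longrightarrow> I (G a b) (H a b)" and c: "\<And>a b. I a b \<Longrightarrow> b \<le> a"
  shows "dominating_type B"
proof -
  have "\<And>n. I (a_seq B n) (b_seq B n)"
    by (rule inv_gen[OF step, where I=I]) (use assms in auto)
  then show ?thesis unfolding dominating_type_def using c by blast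
qed

lemma dom_inv_b:
  assumes step: "\<And>n. ab_seq B (Suc n) = (case ab_seq B n of (a,b) \<Rightarrow> (G a b, H a b))"
    and "I 1 1" and cl: "\<And>a b. I a b \<Longrightarrow> I (G a b) (H a b)" and c: "\<And>a b. I a b \<Longrightarrow> a \<le> b"
  shows "dominating_type B"
proof -
  have "\<And>n. I (a_seq B n) (b_seq B n)"
    by (rule inv_gen[OF step, where I=I]) (use assms in auto)
  then show ?thesis unfolding dominating_type_def using c by blast
qed

lemma eq_inv:
  assumes step: "\<And>n. ab_seq B (Suc n) = (case ab_seq B n of (a,b) \<Rightarrow> (G a b, H a b))"
    and cl: "\<And>a. G a a = H a a"
  shows "equal_growth_type B"
proof -
  have "\<And>n. a_seq B n = b_seq B n"
    by (rule inv_gen[OF step, where I="\<lambda>a b. a = b"]) (auto simp: cl)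
  then show ?thesis unfolding equal_growth_type_def by auto
qed

lemma osc_gen:
  assumes step: "\<And>n. ab_seq B (Suc n) = (case ab_seq B n of (a,b) \<Rightarrow> (G a b, H a b))"
    and "Q (a_seq B m) (b_seq B m)" and QR: "\<And>a b. Q a b \<Longrightarrow> R (G a b) (H a b)"
    and RQ: "\<And>a b. R a b \<Longrightarrow> Q (G a b) (H a b)"
    and Qc: "\<And>a b. Q a b \<Longrightarrow> b \<le> a" and Rc: "\<And>a b. R a b \<Longrightarrow> a < b"
  shows "oscillating_type B"
proof -
  note A = alt_gen[OF step, of Q m R, OF assms(2) QR RQ]
  have "infinite {n. b_seq B n \<le> a_seq B n}"
    by (rule infinite_from[of _ m]) (use A Qc in blast)
  moreover have "infinite {n. a_seq B n < b_seq B n}"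
    by (rule infinite_from[of _ "m+1"]) (use A Rc in \<open>auto simp: add.commute add.left_commute\<close>)
  ultimately show ?thesis unfolding oscillating_type_def by simp
qed

lemma osc_gen2:
  assumes step: "\<And>n. ab_seq B (Suc n) = (case ab_seq B n of (a,b) \<Rightarrow> (G a b, H a b))"
    and "Q (a_seq B m) (b_seq B m)" and QR: "\<And>a b. Q a b \<Longrightarrow> R (G a b) (H a b)"
    and RQ: "\<And>a b. R a b \<Longrightarrow> Q (G a b) (H a b)"
    and Qc: "\<And>a b. Q a b \<Longrightarrow> a < b" and Rc: "\<And>a b. R a b \<Longrightarrow> b \<le> a"
  shows "oscillating_type B"
proof -
  note A = alt_gen[OF step, of Q m R, OF assms(2) QR RQ]
  have "infinite {n. b_seq B n \<le> a_seq B n}"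
    by (rule infinite_from[of _ "m+1"]) (use A Rc in \<open>auto simp: add.commute add.left_commute\<close>)
  moreover have "infinite {n. a_seq B n < b_seq B n}"
    by (rule infinite_from[of _ m]) (use A Qc in blast)
  ultimately show ?thesis unfolding oscillating_type_def by simp
qed


lemma ab0: "a_seq B 0 = 1" "b_seq B 0 = 1" by (simp_all add: a_seq_def b_seq_def)

lemma nl1: fixes a b :: nat assumes "a \<le> b" "2*b \<le> 3*a"
  shows "b*b \<le> a*a + a*b" "2*(a*a) + a*b \<le> 3*(b*b)"
proof -
  have f1: "(2*b)*b \<le> (3*a)*b" using assms by (intro mult_le_mono1)
  have f2: "b*a \<le> (2*a)*a" using assms by (intro mult_le_mono1) linarith
  have f3: "a*a \<le> a*b" "a*b \<le> b*b" using assms by auto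
  show "b*b \<le> a*a + a*b" using f1 f2
    by (simp only: mult.assoc mult.commute mult.left_commute distrib_left; linarith?)
  show "2*(a*a) + a*b \<le> 3*(b*b)" using f3
    by (simp only: mult.assoc mult.commute mult.left_commute distrib_left; linarith?)
qed

lemma nl2: fixes a b :: nat assumes "a \<le> b" "b \<le> 2*a"
  shows "b*b \<le> 2*(a*b)" "a*b \<le> b*b"
proof -
  have f1: "b*b \<le> (2*a)*b" using assms by (intro mult_le_mono1)
  show "b*b \<le> 2*(a*b)" using f1 by (simp only: mult.assoc)
  show "a*b \<le> b*b" using assms by auto
qed

lemma nlQ: fixes a b q :: nat assumes "5*a \<le> b" "q \<le> 2"
  shows "25*(a*a) + 25*(q*(a*b)) \<le> 11*(b*b)"
proof -
  have f1: "(5*a)*(5*a) \<le> b*b" using mult_le_mono[OF assms(1) assms(1)] .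
  have f2: "(5*a)*b \<le> b*b" using assms by (intro mult_le_mono1)
  have f3: "q*(a*b) \<le> 2*(a*b)" using assms by (intro mult_le_mono1)
  show ?thesis using f1 f2 f3
    by (simp only: mult.assoc mult.commute mult.left_commute distrib_left; linarith?)
qed

lemma nlR: fixes a b :: nat assumes "25*b \<le> 11*a"
  shows "5*(b*b) \<le> a*a"
proof -
  have f1: "(25*b)*(25*b) \<le> (11*a)*(11*a)" using mult_le_mono[OF assms assms] .
  show ?thesis using f1
    by (simp only: mult.assoc mult.commute mult.left_commute distrib_left; linarith?)
qed


lemma caseA: assumes step: "\<And>n. ab_seq B (Suc n) = (case ab_seq B n of (a,b) \<Rightarrow> (G a b, H a b))"
  and hG: "\<And>a b. G a b = b*b" and hH: "\<And>a b. H a b = 2*(a*b)"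
  shows "dominating_type B"
proof (rule dom_inv_b[OF step, where I="\<lambda>a b. b = a \<or> b = 2*a"])
  fix a b :: nat assume "b = a \<or> b = 2*a"
  then show "H a b = G a b \<or> H a b = 2 * G a b"
    by (auto simp: hG hH algebra_simps)
qed auto

lemma caseB: assumes step: "\<And>n. ab_seq B (Suc n) = (case ab_seq B n of (a,b) \<Rightarrow> (G a b, H a b))"
  and hG: "\<And>a b. G a b = 2*(a*b)" and hH: "\<And>a b. H a b = a*a"
  shows "dominating_type B"
proof (rule dom_inv_a[OF step, where I="\<lambda>a b. a = b \<or> a = 2*b"])
  fix a b :: nat assume "a = b \<or> a = 2*b"
  then show "G a b = H a b \<or> G a b = 2 * H a b"
    by (auto simp: hG hH algebra_simps)
qed auto

lemma caseC: assumes step: "\<And>n. ab_seq B (Suc n) = (case ab_seq B n of (a,b) \<Rightarrow> (G a b, H a b))"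
  and hG: "\<And>a b. G a b = a*b + b*b" and hH: "\<And>a b. H a b = a*a + 2*(a*b)"
  shows "dominating_type B"
proof (rule dom_inv_b[OF step, where I="\<lambda>a b. a \<le> b \<and> 2*b \<le> 3*a"])
  fix a b :: nat assume "a \<le> b \<and> 2*b \<le> 3*a"
  then have "b*b \<le> a*a + a*b" "2*(a*a) + a*b \<le> 3*(b*b)" using nl1 by auto
  note f = this
  have "G a b \<le> H a b" unfolding hG hH distrib_left using f by linarith
  moreover have "2 * H a b \<le> 3 * G a b" unfolding hG hH distrib_left using f by linarith
  ultimately show "G a b \<le> H a b \<and> 2 * H a b \<le> 3 * G a b" by blast
qed auto

lemma caseD: assumes step: "\<And>n. ab_seq B (Suc n) = (case ab_seq B n of (a,b) \<Rightarrow> (G a b, H a b))"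
  and hG: "\<And>a b. G a b = 2*(a*b) + b*b" and hH: "\<And>a b. H a b = a*a + b*b"
  shows "dominating_type B"
proof (rule dom_inv_a[OF step, where I="\<lambda>a b. b \<le> a \<and> a \<le> 2*b"])
  fix a b :: nat assume "b \<le> a \<and> a \<le> 2*b"
  then have "a*a \<le> 2*(a*b)" "a*b \<le> a*a" using nl2[of b a] by (auto simp: mult.commute)
  note f = this
  have "H a b \<le> G a b" unfolding hG hH distrib_left using f by linarith
  moreover have "G a b \<le> 2 * H a b" unfolding hG hH distrib_left using f by linarith
  ultimately show "H a b \<le> G a b \<and> G a b \<le> 2 * H a b" by blast
qed auto

lemma caseE: assumes step: "\<And>n. ab_seq B (Suc n) = (case ab_seq B n of (a,b) \<Rightarrow> (G a b, H a b))"
  and hG: "\<And>a b. G a b = 2*(a*b) + b*b" and hH: "\<And>a b. H a b = a*a + a*b"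
  shows "dominating_type B"
proof (rule dom_inv_a[OF step, where I="\<lambda>a b. b \<le> a \<and> 2*a \<le> 3*b"])
  fix a b :: nat assume "b \<le> a \<and> 2*a \<le> 3*b"
  then have "a*a \<le> b*b + a*b" "2*(b*b) + a*b \<le> 3*(a*a)" using nl1[of b a] by (auto simp: mult.commute)
  note f = this
  have "H a b \<le> G a b" unfolding hG hH distrib_left using f by linarith
  moreover have "2 * G a b \<le> 3 * H a b" unfolding hG hH distrib_left using f by linarith
  ultimately show "H a b \<le> G a b \<and> 2 * G a b \<le> 3 * H a b" by blast
qed auto

lemma caseF: assumes step: "\<And>n. ab_seq B (Suc n) = (case ab_seq B n of (a,b) \<Rightarrow> (G a b, H a b))"
  and hG: "\<And>a b. G a b = a*a + b*b" and hH: "\<And>a b. H a b = a*a + 2*(a*b)"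
  shows "dominating_type B"
proof (rule dom_inv_b[OF step, where I="\<lambda>a b. a \<le> b \<and> b \<le> 2*a"])
  fix a b :: nat assume "a \<le> b \<and> b \<le> 2*a"
  then have "b*b \<le> 2*(a*b)" "a*b \<le> b*b" using nl2[of a b] by auto
  note f = this
  have "G a b \<le> H a b" unfolding hG hH distrib_left using f by linarith
  moreover have "H a b \<le> 2 * G a b" unfolding hG hH distrib_left using f by linarith
  ultimately show "G a b \<le> H a b \<and> H a b \<le> 2 * G a b" by blast
qed auto

lemma caseGH: assumes step: "\<And>n. ab_seq B (Suc n) = (case ab_seq B n of (a,b) \<Rightarrow> (G a b, H a b))"
  and hG: "\<And>a b. G a b = b*b" and hH: "\<And>a b. H a b = a*a + q*(a*b)"
  and q: "q \<le> 2" and st: "5 * a_seq B 5 \<le> b_seq B 5 \<and> 0 < b_seq B 5"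
  shows "oscillating_type B"
proof (rule osc_gen2[OF step, where Q="\<lambda>a b. 5*a \<le> b \<and> 0 < b" and R="\<lambda>a b. 25*b \<le> 11*a \<and> 0 < a"])
  show "5 * a_seq B 5 \<le> b_seq B 5 \<and> 0 < b_seq B 5" by (rule st)
next
  fix a b :: nat assume a: "5*a \<le> b \<and> 0 < b"
  then have "25*(a*a) + 25*(q*(a*b)) \<le> 11*(b*b)" using nlQ q by auto
  moreover have "0 < b*b" using a by simp
  ultimately show "25 * H a b \<le> 11 * G a b \<and> 0 < G a b" unfolding hG hH by simp
next
  fix a b :: nat assume a: "25*b \<le> 11*a \<and> 0 < a"
  then have "5*(b*b) \<le> a*a" using nlR by auto
  moreover have "0 < a*a" using a by simp
  note f = calculation
  have "5 * G a b \<le> H a b" unfolding hG hH distrib_left using f by linarith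
  moreover have "0 < H a b" unfolding hG hH distrib_left using a by simp
  ultimately show "5 * G a b \<le> H a b \<and> 0 < H a b" by blast
qed auto

lemma caseIJ: assumes step: "\<And>n. ab_seq B (Suc n) = (case ab_seq B n of (a,b) \<Rightarrow> (G a b, H a b))"
  and hG: "\<And>a b. G a b = q*(a*b) + b*b" and hH: "\<And>a b. H a b = a*a"
  and q: "q \<le> 2" and st: "5 * b_seq B 5 \<le> a_seq B 5 \<and> 0 < a_seq B 5"
  shows "oscillating_type B"
proof (rule osc_gen[OF step, where Q="\<lambda>a b. 5*b \<le> a \<and> 0 < a" and R="\<lambda>a b. 25*a \<le> 11*b \<and> 0 < b"])
  show "5 * b_seq B 5 \<le> a_seq B 5 \<and> 0 < a_seq B 5" by (rule st)
next
  fix a b :: nat assume a: "5*b \<le> a \<and> 0 < a"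
  then have "25*(b*b) + 25*(q*(b*a)) \<le> 11*(a*a)" using nlQ[of b a q] q by auto
  moreover have "0 < a*a" using a by simp
  ultimately show "25 * G a b \<le> 11 * H a b \<and> 0 < H a b" unfolding hG hH by (simp add: mult.commute)
next
  fix a b :: nat assume a: "25*a \<le> 11*b \<and> 0 < b"
  then have "5*(a*a) \<le> b*b" using nlR by auto
  moreover have "0 < b*b" using a by simp
  note f = calculation
  have "5 * H a b \<le> G a b" unfolding hG hH distrib_left using f by linarith
  moreover have "0 < G a b" unfolding hG hH distrib_left using a by simp
  ultimately show "5 * H a b \<le> G a b \<and> 0 < G a b" by blast
qed auto


lemma cases6: fixes p1 q1 r1 p2 q2 r2 :: nat
  assumes rng: "p1 \<le> 1" "q1 \<le> 2" "r1 \<le> 1" "p2 \<le> 1" "q2 \<le> 2" "r2 \<le> 1"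
  shows "(p2 \<le> p1 \<and> p2 + q2 \<le> p1 + q1 \<and> p2+q2+r2 \<le> p1+q1+r1)
    \<or> (r1 \<le> r2 \<and> r1 + q1 \<le> r2 + q2 \<and> r1+q1+p1 \<le> r2+q2+p2)
    \<or> (p1+q1+r1 = p2+q2+r2)
    \<or> (p1,q1,r1,p2,q2,r2) \<in> {(0,0,1,0,2,0), (0,2,0,1,0,0), (0,1,1,1,2,0), (0,2,1,1,0,1),
     (0,2,1,1,1,0), (1,0,1,1,2,0), (0,0,1,1,1,0), (0,0,1,1,2,0), (0,1,1,1,0,0), (0,2,1,1,0,0)}"
proof -
    have "p1 = 0 \<or> p1 = 1" "q1 = 0 \<or> q1 = 1 \<or> q1 = 2" "r1 = 0 \<or> r1 = 1"
         "p2 = 0 \<or> p2 = 1" "q2 = 0 \<or> q2 = 1 \<or> q2 = 2" "r2 = 0 \<or> r2 = 1" using rng by auto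
    then show ?thesis by (elim disjE) simp_all
qed

theorem theorem3:
  fixes B :: "(nat \<times> nat \<times> nat) set"
  assumes "basic_set B"
  shows "equal_growth_type B \<or> dominating_type B \<or> oscillating_type B \<or> cooperating_type B"
proof -
  define p1 where "p1 = ind B (1,1,1)"
  define q1 where "q1 = ind B (1,1,2) + ind B (1,2,1)"
  define r1 where "r1 = ind B (1,2,2)"
  define p2 where "p2 = ind B (2,1,1)"
  define q2 where "q2 = ind B (2,1,2) + ind B (2,2,1)"
  define r2 where "r2 = ind B (2,2,2)"
  define G where "G = (\<lambda>a b::nat. p1*(a*a) + q1*(a*b) + r1*(b*b))"
  define H where "H = (\<lambda>a b::nat. p2*(a*a) + q2*(a*b) + r2*(b*b))"
  have five: "(5::nat) = Suc (Suc (Suc (Suc (Suc 0))))" by simp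
  have step: "\<And>n. ab_seq B (Suc n) = (case ab_seq B n of (a,b) \<Rightarrow> (G a b, H a b))"
    by (simp add: snre_eq G_def H_def p1_def q1_def r1_def p2_def q2_def r2_def
        power2_eq_square split: prod.split)
  have rng: "p1 \<le> 1" "q1 \<le> 2" "r1 \<le> 1" "p2 \<le> 1" "q2 \<le> 2" "r2 \<le> 1"
    unfolding p1_def q1_def r1_def p2_def q2_def r2_def by (auto simp: ind_def)
  have key: "\<And>x y pa qa ra pb qb rb :: nat. y \<le> x \<Longrightarrow> pb \<le> pa \<Longrightarrow> pb + qb \<le> pa + qa \<Longrightarrow>
      pb+qb+rb \<le> pa+qa+ra \<Longrightarrow> pb*(x*x) + qb*(x*y) + rb*(y*y) \<le> pa*(x*x) + qa*(x*y) + ra*(y*y)"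
    by (rule keyineq)
  consider "p2 \<le> p1 \<and> p2 + q2 \<le> p1 + q1 \<and> p2+q2+r2 \<le> p1+q1+r1"
    | "r1 \<le> r2 \<and> r1 + q1 \<le> r2 + q2 \<and> r1+q1+p1 \<le> r2+q2+p2"
    | "p1+q1+r1 = p2+q2+r2"
    | "(p1,q1,r1,p2,q2,r2) = (0,0,1,0,2,0)" | "(p1,q1,r1,p2,q2,r2) = (0,2,0,1,0,0)"
    | "(p1,q1,r1,p2,q2,r2) = (0,1,1,1,2,0)" | "(p1,q1,r1,p2,q2,r2) = (0,2,1,1,0,1)"
    | "(p1,q1,r1,p2,q2,r2) = (0,2,1,1,1,0)" | "(p1,q1,r1,p2,q2,r2) = (1,0,1,1,2,0)"
    | "(p1,q1,r1,p2,q2,r2) = (0,0,1,1,1,0)" | "(p1,q1,r1,p2,q2,r2) = (0,0,1,1,2,0)"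
    | "(p1,q1,r1,p2,q2,r2) = (0,1,1,1,0,0)" | "(p1,q1,r1,p2,q2,r2) = (0,2,1,1,0,0)"
    using cases6[OF rng] by auto
  then show ?thesis
  proof cases
    case 1
    have "dominating_type B"
      by (rule dom_a[OF step]) (use 1 key in \<open>simp add: G_def H_def\<close>)
    then show ?thesis by simp
  next
    case 2
    have "dominating_type B"
    proof (rule dom_b[OF step])
      fix a b :: nat assume "a \<le> b"
      then have "r1*(b*b) + q1*(b*a) + p1*(a*a) \<le> r2*(b*b) + q2*(b*a) + p2*(a*a)"
        using 2 key[of a b r1 r2 q1 q2 p1 p2] by simp
      then show "G a b \<le> H a b" unfolding G_def H_def by (simp add: ac_simps)
    qed
    then show ?thesis by simp
  next
    case 3
    have "equal_growth_type B"
    proof (rule eq_inv[OF step])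
      fix a :: nat
      have "G a a = (p1+q1+r1)*(a*a)" "H a a = (p2+q2+r2)*(a*a)"
        unfolding G_def H_def by (simp_all add: algebra_simps)
      then show "G a a = H a a" using 3 by simp
    qed
    then show ?thesis by simp
  next
    case 4 then show ?thesis using caseA[OF step] by (simp add: G_def H_def)
  next
    case 5 then show ?thesis using caseB[OF step] by (simp add: G_def H_def)
  next
    case 6 then show ?thesis using caseC[OF step] by (simp add: G_def H_def)
  next
    case 7 then show ?thesis using caseD[OF step] by (simp add: G_def H_def)
  next
    case 8 then show ?thesis using caseE[OF step] by (simp add: G_def H_def)
  next
    case 9 then show ?thesis using caseF[OF step] by (simp add: G_def H_def)
  next
    case 10
    have eG: "\<And>a b. G a b = b*b" and eH: "\<And>a b. H a b = a*a + 1*(a*b)" using 10 by (simp_all add: G_def H_def)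
    have v1: "a_seq B (Suc 0) = 1" "b_seq B (Suc 0) = 2" using stepa[OF step, of 0] by (simp_all add: ab0 eG eH)
    have v2: "a_seq B (Suc (Suc 0)) = 4" "b_seq B (Suc (Suc 0)) = 3" using stepa[OF step, of "Suc 0"] v1 by (simp_all add: eG eH)
    have v3: "a_seq B (Suc (Suc (Suc 0))) = 9" "b_seq B (Suc (Suc (Suc 0))) = 28" using stepa[OF step, of "Suc (Suc 0)"] v2 by (simp_all add: eG eH)
    have v4: "a_seq B (Suc (Suc (Suc (Suc 0)))) = 784" "b_seq B (Suc (Suc (Suc (Suc 0)))) = 333" using stepa[OF step, of "Suc (Suc (Suc 0))"] v3 by (simp_all add: eG eH)
    have v5: "a_seq B (Suc (Suc (Suc (Suc (Suc 0))))) = 110889" "b_seq B (Suc (Suc (Suc (Suc (Suc 0))))) = 875728" using stepa[OF step, of "Suc (Suc (Suc (Suc 0)))"] v4 by (simp_all add: eG eH)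
    have "oscillating_type B"
      by (rule caseGH[OF step eG eH]) (simp_all add: five v5)
    then show ?thesis by simp
  next
    case 11
    have eG: "\<And>a b. G a b = b*b" and eH: "\<And>a b. H a b = a*a + 2*(a*b)" using 11 by (simp_all add: G_def H_def)
    have v1: "a_seq B (Suc 0) = 1" "b_seq B (Suc 0) = 3" using stepa[OF step, of 0] by (simp_all add: ab0 eG eH)
    have v2: "a_seq B (Suc (Suc 0)) = 9" "b_seq B (Suc (Suc 0)) = 7" using stepa[OF step, of "Suc 0"] v1 by (simp_all add: eG eH)
    have v3: "a_seq B (Suc (Suc (Suc 0))) = 49" "b_seq B (Suc (Suc (Suc 0))) = 207" using stepa[OF step, of "Suc (Suc 0)"] v2 by (simp_all add: eG eH)
    have v4: "a_seq B (Suc (Suc (Suc (Suc 0)))) = 42849" "b_seq B (Suc (Suc (Suc (Suc 0)))) = 22687" using stepa[OF step, of "Suc (Suc (Suc 0))"] v3 by (simp_all add: eG eH)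
    have v5: "a_seq B (Suc (Suc (Suc (Suc (Suc 0))))) = 514699969" "b_seq B (Suc (Suc (Suc (Suc (Suc 0))))) = 3780267327" using stepa[OF step, of "Suc (Suc (Suc (Suc 0)))"] v4 by (simp_all add: eG eH)
    have "oscillating_type B"
      by (rule caseGH[OF step eG eH]) (simp_all add: five v5)
    then show ?thesis by simp
  next
    case 12
    have eG: "\<And>a b. G a b = 1*(a*b) + b*b" and eH: "\<And>a b. H a b = a*a" using 12 by (simp_all add: G_def H_def)
    have v1: "a_seq B (Suc 0) = 2" "b_seq B (Suc 0) = 1" using stepa[OF step, of 0] by (simp_all add: ab0 eG eH)
    have v2: "a_seq B (Suc (Suc 0)) = 3" "b_seq B (Suc (Suc 0)) = 4" using stepa[OF step, of "Suc 0"] v1 by (simp_all add: eG eH)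
    have v3: "a_seq B (Suc (Suc (Suc 0))) = 28" "b_seq B (Suc (Suc (Suc 0))) = 9" using stepa[OF step, of "Suc (Suc 0)"] v2 by (simp_all add: eG eH)
    have v4: "a_seq B (Suc (Suc (Suc (Suc 0)))) = 333" "b_seq B (Suc (Suc (Suc (Suc 0)))) = 784" using stepa[OF step, of "Suc (Suc (Suc 0))"] v3 by (simp_all add: eG eH)
    have v5: "a_seq B (Suc (Suc (Suc (Suc (Suc 0))))) = 875728" "b_seq B (Suc (Suc (Suc (Suc (Suc 0))))) = 110889" using stepa[OF step, of "Suc (Suc (Suc (Suc 0)))"] v4 by (simp_all add: eG eH)
    have "oscillating_type B"
      by (rule caseIJ[OF step eG eH]) (simp_all add: five v5)
    then show ?thesis by simp
  next
    case 13
    have eG: "\<And>a b. G a b = 2*(a*b) + b*b" and eH: "\<And>a b. H a b = a*a" using 13 by (simp_all add: G_def H_def)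
    have v1: "a_seq B (Suc 0) = 3" "b_seq B (Suc 0) = 1" using stepa[OF step, of 0] by (simp_all add: ab0 eG eH)
    have v2: "a_seq B (Suc (Suc 0)) = 7" "b_seq B (Suc (Suc 0)) = 9" using stepa[OF step, of "Suc 0"] v1 by (simp_all add: eG eH)
    have v3: "a_seq B (Suc (Suc (Suc 0))) = 207" "b_seq B (Suc (Suc (Suc 0))) = 49" using stepa[OF step, of "Suc (Suc 0)"] v2 by (simp_all add: eG eH)
    have v4: "a_seq B (Suc (Suc (Suc (Suc 0)))) = 22687" "b_seq B (Suc (Suc (Suc (Suc 0)))) = 42849" using stepa[OF step, of "Suc (Suc (Suc 0))"] v3 by (simp_all add: eG eH)
    have v5: "a_seq B (Suc (Suc (Suc (Suc (Suc 0))))) = 3780267327" "b_seq B (Suc (Suc (Suc (Suc (Suc 0))))) = 514699969" using stepa[OF step, of "Suc (Suc (Suc (Suc 0)))"] v4 by (simp_all add: eG eH)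
    have "oscillating_type B"
      by (rule caseIJ[OF step eG eH]) (simp_all add: five v5)
    then show ?thesis by simp
  qed
qed

end
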